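(* Let $f:\mathbb{N}\to\mathbb{R}$ with $f(1)=1$. Assume $f(n)=0$ for all even $n$ and there exist $C>0$ and $\gamma\in\mathbb{R}$ such that $|f(n)|\leq Cn^\gamma$ for all $n\geq2$. Then $$|f^{-1}(n)|\leq n^{\gamma+\varsigma}, \quad n\geq2,$$ where $\varsigma>1$ is the unique root of $\left(1-2^{-s}\right)\zeta(s)=\frac{1}{C}+1$. In particular, if $C=1$, then $\varsigma=\eta=1.37779\dots$
   Context: $f^{-1}$ denotes the Dirichlet inverse of $f$: the arithmetic function with $\sum_{d\mid n} f(n/d) f^{-1}(d)=\varepsilon(n)$ for all $n$, where $\varepsilon(1)=1$ and $\varepsilon(n)=0$ for $n\ge2$. $\zeta$ is the Riemann zeta function. *)

theory Defs
  imports "HOL-Analysis.Analysis"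
begin

text \<open>Arithmetic functions are modelled as functions nat => real; the value at 0 is irrelevant.
  g is the Dirichlet inverse of f iff sum over d dvd n of f(n/d) g(d) equals epsilon(n) for all n >= 1.\<close>
definition is_dirichlet_inverse :: "(nat \<Rightarrow> real) \<Rightarrow> (nat \<Rightarrow> real) \<Rightarrow> bool" where
  "is_dirichlet_inverse f g \<longleftrightarrow>
     (\<forall>n\<ge>1. (\<Sum>d | d dvd n. f (n div d) * g d) = (if n = 1 then 1 else 0))"

definition zeta_real :: "real \<Rightarrow> real" where
  "zeta_real s = (\<Sum>n. 1 / (real (Suc n) powr s))"

end

theory Submission imports Defs begin

definition oz :: "real \<Rightarrow> real" where
  "oz s = (\<Sum>k. 1 / real (2*k+1) powr s)"

lemma zeta_summable: assumes "s > 1" shows "summable (\<lambda>n. 1 / real (Suc n) powr s)"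
proof -
  have "summable (\<lambda>n. real n powr (-s))" using summable_real_powr_iff[of "-s"] assms by simp
  then have "summable (\<lambda>n. real (Suc n) powr (-s))" by (subst summable_Suc_iff)
  then show ?thesis by (simp add: powr_minus_divide)
qed

lemma oz_summable: assumes "s > 1" shows "summable (\<lambda>k. 1 / real (2*k+1) powr s)"
proof (rule summable_comparison_test[OF _ zeta_summable[OF assms]])
  show "\<exists>N. \<forall>n\<ge>N. norm (1 / real (2*n+1) powr s) \<le> 1 / real (Suc n) powr s"
    using assms by (auto intro!: exI[of _ 0] divide_left_mono powr_mono2 mult_pos_pos)
qed

lemma oz_eq: assumes "s > 1" shows "(1 - 2 powr (-s)) * zeta_real s = oz s"
proof -
  define a where "a n = 1 / real (Suc n) powr s" for n
  have sa: "summable a" unfolding a_def using zeta_summable[OF assms] .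
  have e: "a (2*n) = 1 / real (2*n+1) powr s" for n unfolding a_def by simp
  have o: "a (2*n+1) = 2 powr (-s) * a n" for n
  proof -
    have "real (Suc (2*n+1)) = 2 * real (Suc n)" by simp
    then have "real (Suc (2*n+1)) powr s = 2 powr s * real (Suc n) powr s"
      using powr_mult[of 2 "real (Suc n)" s] by (simp only:)
    then show ?thesis unfolding a_def by (simp add: powr_minus_divide)
  qed
  have L1: "(\<lambda>n. \<Sum>i<n. a i) \<longlonglongrightarrow> zeta_real s"
    using summable_LIMSEQ[OF sa] unfolding a_def zeta_real_def by simp
  have "((\<lambda>n. \<Sum>i<n. a i) \<circ> (\<lambda>n. 2*n)) \<longlonglongrightarrow> zeta_real s"
    by (rule LIMSEQ_subseq_LIMSEQ[OF L1]) (auto simp: strict_mono_def)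
  then have L2: "(\<lambda>n. (\<Sum>i<n. a (2*i)) + (\<Sum>i<n. a (2*i+1))) \<longlonglongrightarrow> zeta_real s"
    using sum_split_even_odd[of a a] by (simp add: o_def)
  have L3: "(\<lambda>n. (\<Sum>i<n. a (2*i)) + (\<Sum>i<n. a (2*i+1))) \<longlonglongrightarrow> oz s + 2 powr (-s) * zeta_real s"
  proof (rule tendsto_add)
    show "(\<lambda>n. \<Sum>i<n. a (2*i)) \<longlonglongrightarrow> oz s"
      unfolding e oz_def using summable_LIMSEQ[OF oz_summable[OF assms]] by simp
    show "(\<lambda>n. \<Sum>i<n. a (2*i+1)) \<longlonglongrightarrow> 2 powr (-s) * zeta_real s"
      unfolding o sum_distrib_left[symmetric] by (intro tendsto_mult tendsto_const L1)
  qed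
  have "zeta_real s = oz s + 2 powr (-s) * zeta_real s" using LIMSEQ_unique[OF L2 L3] .
  then show ?thesis by (simp add: algebra_simps)
qed

lemma oz_strict: assumes "1 < s" "s < t" shows "oz t < oz s"
proof -
  have "0 < (\<Sum>k. 1 / real (2*k+1) powr s - 1 / real (2*k+1) powr t)"
  proof (rule suminf_pos2)
    show "summable (\<lambda>k. 1 / real (2*k+1) powr s - 1 / real (2*k+1) powr t)"
      using oz_summable assms by (intro summable_diff) auto
    show "0 \<le> 1 / real (2*n+1) powr s - 1 / real (2*n+1) powr t" for n
    proof -
      have "real (2*n+1) powr s \<le> real (2*n+1) powr t" using assms by (intro powr_mono) auto
      then have "1 / real (2*n+1) powr t \<le> 1 / real (2*n+1) powr s"
        by (intro divide_left_mono) auto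
      then show "0 \<le> 1 / real (2*n+1) powr s - 1 / real (2*n+1) powr t" by simp
    qed
    have "(3::real) powr s < 3 powr t" using assms by (intro powr_less_mono) auto
    then show "0 < 1 / real (2*1+1) powr s - 1 / real (2*1+1) powr t"
      by (simp add: field_simps)
  qed
  also have "\<dots> = oz s - oz t" unfolding oz_def
    using oz_summable[of s] oz_summable[of t] assms by (intro suminf_diff[symmetric]) auto
  finally show ?thesis by simp
qed

lemma oz_cont: assumes "a > 1" shows "continuous_on {a..} oz"
proof -
  have "uniform_limit {a..} (\<lambda>n x. \<Sum>i<n. 1 / real (2*i+1) powr x) (\<lambda>x. \<Sum>i. 1 / real (2*i+1) powr x) sequentially"
  proof (rule Weierstrass_m_test[OF _ oz_summable[OF assms]])
    fix n x assume "x \<in> {a..}"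
    then show "norm (1 / real (2*n+1) powr x) \<le> 1 / real (2*n+1) powr a"
      using assms by (auto intro!: divide_left_mono powr_mono mult_pos_pos)
  qed
  then have "continuous_on {a..} (\<lambda>x. \<Sum>i. 1 / real (2*i+1) powr x)"
    by (rule uniform_limit_theorem[rotated]) (auto intro!: always_eventually continuous_intros)
  then show ?thesis unfolding oz_def[abs_def] .
qed

lemma oz_large: "\<exists>s>1. oz s > y"
proof -
  have ns: "\<not> summable (\<lambda>k. 1 / real (2*k+1))"
  proof
    assume "summable (\<lambda>k. 1 / real (2*k+1))"
    then have "summable (\<lambda>k. 2 * (1 / real (2*k+1)))" by (rule summable_mult)
    moreover have "norm (inverse (real (Suc k))) \<le> 2 * (1 / real (2*k+1))" for k
      by (simp add: field_simps)
    ultimately have "summable (\<lambda>k. inverse (real (Suc k)))"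
      by (rule summable_comparison_test'[where N=0])
    then have "summable (\<lambda>k. inverse (real k))" by (subst (asm) summable_Suc_iff)
    then show False using not_summable_harmonic[where 'a=real] by simp
  qed
  have "\<exists>N. (\<Sum>k\<le>N. 1 / real (2*k+1)) > y + 1"
  proof (rule ccontr)
    assume "\<not> ?thesis"
    then have "\<And>N. (\<Sum>k\<le>N. 1 / real (2*k+1)) \<le> y + 1" by (simp add: not_less)
    then have "summable (\<lambda>k. 1 / real (2*k+1))" by (intro bounded_imp_summable) auto
    with ns show False by simp
  qed
  then obtain N where N: "(\<Sum>k\<le>N. 1 / real (2*k+1)) > y + 1" by blast
  define P where "P s = (\<Sum>k\<le>N. 1 / real (2*k+1) powr s)" for s
  have P1: "P 1 = (\<Sum>k\<le>N. 1 / real (2*k+1))" unfolding P_def by simp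
  have "isCont P 1" unfolding P_def by (intro continuous_intros) auto
  then have "(P \<longlongrightarrow> P 1) (at_right 1)"
    unfolding isCont_def by (rule tendsto_mono[OF at_within_le_at])
  from order_tendstoD(1)[OF this, of "y+1"] N P1
  have "eventually (\<lambda>s. y + 1 < P s) (at_right 1)" by simp
  then obtain b where b: "b > 1" "\<And>s. s > 1 \<Longrightarrow> s < b \<Longrightarrow> y + 1 < P s"
    unfolding eventually_at_right_field by blast
  define s where "s = (1 + b) / 2"
  have s: "s > 1" "s < b" using b unfolding s_def by auto
  have "P s \<le> oz s" unfolding P_def oz_def
    by (rule sum_le_suminf[OF oz_summable[OF s(1)]]) auto
  with b(2)[OF s] s show ?thesis by (intro exI[of _ s]) auto
qed

lemma oz_small: assumes "y > 1" shows "\<exists>t>1. oz t < y"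
proof -
  define Z where "Z = (\<Sum>n. 1 / real (Suc n) powr 2)"
  have sZ: "summable (\<lambda>n. 1 / real (Suc n) powr 2)" by (rule zeta_summable) simp
  have Z0: "Z \<ge> 0" unfolding Z_def by (rule suminf_nonneg[OF sZ]) simp
  define t where "t = 2 + log 3 (Z / (y - 1) + 1)"
  have q0: "Z / (y - 1) + 1 \<ge> 1" using Z0 assms by simp
  have t2: "t \<ge> 2" unfolding t_def using q0 by simp
  have p3: "3 powr (t - 2) = Z / (y - 1) + 1" unfolding t_def using q0 by simp
  have m3: "3 powr (2 - t) = 1 / 3 powr (t - 2)"
    using powr_minus_divide[of "3::real" "t-2"] by simp
  have bnd: "1 / real (2*(n+1)+1) powr t \<le> 3 powr (2 - t) * (1 / real (Suc n) powr 2)" for n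
  proof -
    have "real (Suc n) powr 2 * 3 powr (t - 2) \<le> real (2*(n+1)+1) powr 2 * real (2*(n+1)+1) powr (t - 2)"
      using t2 by (intro mult_mono powr_mono2) auto
    also have "\<dots> = real (2*(n+1)+1) powr t" by (subst powr_add[symmetric]) simp
    finally have "real (Suc n) powr 2 * 3 powr (t - 2) \<le> real (2*(n+1)+1) powr t" .
    then have "1 / real (2*(n+1)+1) powr t \<le> 1 / (real (Suc n) powr 2 * 3 powr (t - 2))"
      by (intro divide_left_mono) auto
    also have "\<dots> = 3 powr (2 - t) * (1 / real (Suc n) powr 2)"
      unfolding m3 by simp
    finally show ?thesis .
  qed
  have st: "summable (\<lambda>k. 1 / real (2*k+1) powr t)" using t2 by (intro oz_summable) auto
  have st1: "summable (\<lambda>n. 1 / real (2*(n+1)+1) powr t)"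
    using summable_ignore_initial_segment[OF st, of 1] by simp
  have "oz t = (\<Sum>n. 1 / real (2*(n+1)+1) powr t) + 1"
    unfolding oz_def using suminf_split_initial_segment[OF st, of 1] by simp
  also have "(\<Sum>n. 1 / real (2*(n+1)+1) powr t) \<le> (\<Sum>n. 3 powr (2 - t) * (1 / real (Suc n) powr 2))"
    by (intro suminf_le bnd summable_mult sZ st1)
  also have "\<dots> = 3 powr (2 - t) * Z" unfolding Z_def by (rule suminf_mult[OF sZ])
  also have "3 powr (2 - t) = 1 / (Z / (y - 1) + 1)"
    using p3 m3 by simp
  finally have c1: "oz t \<le> Z / (Z / (y - 1) + 1) + 1" by simp
  have sq: "y * 2 < 1 + y * y"
  proof -
    have "0 < (y - 1) * (y - 1)" using assms by simp
    then show ?thesis by (simp add: algebra_simps)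
  qed
  have c2: "Z / (Z / (y - 1) + 1) < y - 1"
    using Z0 assms sq by (simp add: field_simps)
  show ?thesis using c1 c2 t2 by (intro exI[of _ t]) auto
qed


lemma oz_root: assumes "y > 1" shows "\<exists>!\<sigma>. \<sigma> > 1 \<and> oz \<sigma> = y"
proof -
  obtain s where s: "s > 1" "oz s > y" using oz_large by blast
  obtain t where t: "t > 1" "oz t < y" using oz_small[OF assms] by blast
  have st: "s \<le> t"
  proof (rule ccontr)
    assume "\<not> s \<le> t"
    then have "oz s < oz t" using oz_strict[of t s] t by auto
    with s t show False by simp
  qed
  have "continuous_on {s..t} oz"
    by (rule continuous_on_subset[OF oz_cont[OF s(1)]]) auto
  from IVT2'[of oz t y s, OF _ _ st this] s t
  obtain x where x: "s \<le> x" "oz x = y" by force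
  show ?thesis
  proof (rule ex1I[of _ x])
    show "1 < x \<and> oz x = y" using x s by simp
    fix z assume z: "1 < z \<and> oz z = y"
    show "z = x"
    proof (rule ccontr)
      assume "z \<noteq> x"
      then have "z < x \<or> x < z" by auto
      then show False using oz_strict[of z x] oz_strict[of x z] z x s by auto
    qed
  qed
qed

lemma inverse_bound:
  fixes f g :: "nat \<Rightarrow> real" and C \<gamma> \<sigma> :: real
  assumes f1: "f 1 = 1"
    and feven: "\<And>n. even n \<Longrightarrow> f n = 0"
    and Cpos: "C > 0"
    and fbound: "\<And>n. n \<ge> 2 \<Longrightarrow> \<bar>f n\<bar> \<le> C * real n powr \<gamma>"
    and sg: "\<sigma> > 1" and ozs: "oz \<sigma> = 1 / C + 1"
    and inv: "is_dirichlet_inverse f g"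
  shows "n \<ge> 1 \<Longrightarrow> \<bar>g n\<bar> \<le> real n powr (\<gamma> + \<sigma>)"
proof (induction n rule: less_induct)
  case (less n)
  have invn: "(\<Sum>d | d dvd n. f (n div d) * g d) = (if n = 1 then 1 else 0)"
    using inv less.prems unfolding is_dirichlet_inverse_def by blast
  show ?case
  proof (cases "n = 1")
    case True
    have "{d. d dvd (1::nat)} = {1}" by auto
    then have "g 1 = 1" using invn True f1 by simp
    then show ?thesis using True by simp
  next
    case False
    with less.prems have n2: "n \<ge> 2" by simp
    define D where "D = {d. d dvd n}"
    have fD: "finite D" unfolding D_def using n2 by (intro finite_divisors_nat) simp
    have nD: "n \<in> D" unfolding D_def by simp
    have "0 = (\<Sum>d\<in>D. f (n div d) * g d)" using invn False unfolding D_def by simp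
    also have "\<dots> = f (n div n) * g n + (\<Sum>d\<in>D - {n}. f (n div d) * g d)"
      using sum.remove[OF fD nD] by simp
    finally have gn: "g n = - (\<Sum>d\<in>D - {n}. f (n div d) * g d)" using f1 n2 by simp
    define T where "T d = (if odd (n div d) then C * real n powr (\<gamma> + \<sigma>) * (1 / real (n div d) powr \<sigma>) else 0)" for d
    have dprops: "d \<ge> 1 \<and> d < n \<and> n div d \<ge> 2 \<and> real n = real (n div d) * real d" if "d \<in> D - {n}" for d
    proof -
      have dv: "d dvd n" "d \<noteq> n" using that unfolding D_def by auto
      then have "d \<le> n" using n2 by (intro dvd_imp_le) auto
      with dv have dn: "d < n" by simp
      have d1: "d \<ge> 1" using dv n2 by (cases "d = 0") auto
      have e: "n div d * d = n" using dv by simp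
      have "n div d \<ge> 2"
      proof (rule ccontr)
        assume "\<not> n div d \<ge> 2"
        then have "n div d \<le> 1" by simp
        then have "n div d * d \<le> d" by simp
        with e dn show False by simp
      qed
      moreover have "real n = real (n div d) * real d" using e by (metis of_nat_mult)
      ultimately show ?thesis using d1 dn by simp
    qed
    have bnd: "\<bar>f (n div d) * g d\<bar> \<le> T d" if "d \<in> D - {n}" for d
    proof (cases "odd (n div d)")
      case False
      then show ?thesis unfolding T_def using feven by simp
    next
      case True
      define m where "m = n div d"
      have dp: "d \<ge> 1" "d < n" "m \<ge> 2" "real n = real m * real d"
        using dprops[OF that] unfolding m_def by auto
      have "\<bar>f m * g d\<bar> = \<bar>f m\<bar> * \<bar>g d\<bar>" by (simp add: abs_mult)
      also have "\<dots> \<le> (C * real m powr \<gamma>) * real d powr (\<gamma> + \<sigma>)"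
        using fbound[OF dp(3)] less.IH[OF dp(2) dp(1)] by (intro mult_mono) auto
      also have "\<dots> = C * real n powr (\<gamma> + \<sigma>) * (1 / real m powr \<sigma>)"
      proof -
        have "real n powr (\<gamma> + \<sigma>) = real m powr \<gamma> * real m powr \<sigma> * real d powr (\<gamma> + \<sigma>)"
          unfolding dp(4) by (simp add: powr_mult powr_add)
        moreover have "real m powr \<sigma> > 0" using dp(3) by simp
        ultimately show ?thesis by (simp add: field_simps)
      qed
      finally show ?thesis unfolding T_def m_def using True by simp
    qed
    define E where "E = {d \<in> D - {n}. odd (n div d)}"
    have fE: "finite E" unfolding E_def using fD by simp
    define h where "h d = (n div d) div 2" for d
    have hinj: "inj_on h E"
    proof (rule inj_onI)
      fix a b assume ab: "a \<in> E" "b \<in> E" "h a = h b"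
      then have "n div a = n div b" unfolding h_def E_def by (metis odd_two_times_div_two_succ mem_Collect_eq)
      moreover have "n div a * a = n" "n div b * b = n" using ab unfolding E_def D_def by auto
      moreover have "n div a > 0" using dprops ab unfolding E_def by force
      ultimately show "a = b" by (metis mult_left_cancel not_gr0)
    qed
    have h0: "0 \<notin> h ` E"
    proof
      assume "0 \<in> h ` E"
      then obtain d where "d \<in> E" "h d = 0" by auto
      then show False using dprops[of d] unfolding E_def h_def by auto
    qed
    have hv: "1 / real (2 * h d + 1) powr \<sigma> = 1 / real (n div d) powr \<sigma>" if "d \<in> E" for d
    proof -
      have "2 * h d + 1 = n div d" using that unfolding E_def h_def by simp
      then show ?thesis by simp
    qed
    have "(\<Sum>k\<in>insert 0 (h ` E). 1 / real (2*k+1) powr \<sigma>) \<le> oz \<sigma>"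
      unfolding oz_def by (rule sum_le_suminf[OF oz_summable[OF sg]]) (use fE in auto)
    then have "1 + (\<Sum>k\<in>h ` E. 1 / real (2*k+1) powr \<sigma>) \<le> 1 / C + 1"
      using h0 fE ozs by simp
    then have "(\<Sum>k\<in>h ` E. 1 / real (2*k+1) powr \<sigma>) \<le> 1 / C" by simp
    moreover have "(\<Sum>k\<in>h ` E. 1 / real (2*k+1) powr \<sigma>) = (\<Sum>d\<in>E. 1 / real (n div d) powr \<sigma>)"
      using sum.reindex[OF hinj, of "\<lambda>k. 1 / real (2*k+1) powr \<sigma>"] hv by simp
    ultimately have S: "(\<Sum>d\<in>E. 1 / real (n div d) powr \<sigma>) \<le> 1 / C" by simp
    have "(\<Sum>d\<in>D - {n}. T d) = (\<Sum>d\<in>E. C * real n powr (\<gamma> + \<sigma>) * (1 / real (n div d) powr \<sigma>))"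
      unfolding E_def T_def by (rule sum.inter_filter[symmetric]) (use fD in simp)
    also have "\<dots> = C * real n powr (\<gamma> + \<sigma>) * (\<Sum>d\<in>E. 1 / real (n div d) powr \<sigma>)"
      by (simp add: sum_distrib_left)
    also have "\<dots> \<le> C * real n powr (\<gamma> + \<sigma>) * (1 / C)"
      using S Cpos by (intro mult_left_mono) auto
    also have "\<dots> = real n powr (\<gamma> + \<sigma>)" using Cpos by simp
    finally have ST: "(\<Sum>d\<in>D - {n}. T d) \<le> real n powr (\<gamma> + \<sigma>)" .
    have "\<bar>g n\<bar> = \<bar>\<Sum>d\<in>D - {n}. f (n div d) * g d\<bar>" using gn by simp
    also have "\<dots> \<le> (\<Sum>d\<in>D - {n}. \<bar>f (n div d) * g d\<bar>)" by (rule sum_abs)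
    also have "\<dots> \<le> (\<Sum>d\<in>D - {n}. T d)" by (rule sum_mono) (rule bnd)
    finally show ?thesis using ST by simp
  qed
qed

theorem proposition3p17:
  fixes f :: "nat \<Rightarrow> real" and C \<gamma> :: real
  assumes f1: "f 1 = 1"
    and feven: "\<And>n. even n \<Longrightarrow> f n = 0"
    and Cpos: "C > 0"
    and fbound: "\<And>n. n \<ge> 2 \<Longrightarrow> \<bar>f n\<bar> \<le> C * real n powr \<gamma>"
  shows "(\<exists>!\<sigma>. \<sigma> > 1 \<and> (1 - 2 powr (-\<sigma>)) * zeta_real \<sigma> = 1 / C + 1)
    \<and> (\<forall>\<sigma> g. \<sigma> > 1 \<and> (1 - 2 powr (-\<sigma>)) * zeta_real \<sigma> = 1 / C + 1
            \<and> is_dirichlet_inverse f g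
          \<longrightarrow> (\<forall>n\<ge>2. \<bar>g n\<bar> \<le> real n powr (\<gamma> + \<sigma>)))"
proof
  have eqv: "(\<sigma> > 1 \<and> (1 - 2 powr (-\<sigma>)) * zeta_real \<sigma> = 1 / C + 1) \<longleftrightarrow> (\<sigma> > 1 \<and> oz \<sigma> = 1 / C + 1)" for \<sigma>
    using oz_eq[of \<sigma>] by auto
  have "1 / C + 1 > 1" using Cpos by simp
  from oz_root[OF this]
  show "\<exists>!\<sigma>. \<sigma> > 1 \<and> (1 - 2 powr (-\<sigma>)) * zeta_real \<sigma> = 1 / C + 1" unfolding eqv .
  show "\<forall>\<sigma> g. \<sigma> > 1 \<and> (1 - 2 powr (-\<sigma>)) * zeta_real \<sigma> = 1 / C + 1
            \<and> is_dirichlet_inverse f g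
          \<longrightarrow> (\<forall>n\<ge>2. \<bar>g n\<bar> \<le> real n powr (\<gamma> + \<sigma>))"
  proof (intro allI impI)
    fix \<sigma> g n assume H: "\<sigma> > 1 \<and> (1 - 2 powr (-\<sigma>)) * zeta_real \<sigma> = 1 / C + 1
            \<and> is_dirichlet_inverse f g" and n: "n \<ge> (2::nat)"
    then have "oz \<sigma> = 1 / C + 1" using oz_eq[of \<sigma>] by simp
    with H n show "\<bar>g n\<bar> \<le> real n powr (\<gamma> + \<sigma>)"
      using inverse_bound[OF f1 feven Cpos fbound, of \<sigma> g n] by auto
  qed
qed

end
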